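(* Let $G$ be a non-discrete compact group with normalized Haar measure $\nu$ ($\nu(G)=1$). For every neighborhood $U$ of the identity of $G$ there exists a $U$-fine equisize partition of $G$.
   Context: A finite partition $\mathcal P$ of a set $X\subseteq G$ into Haar-measurable sets is called $U$-fine if for every $P\in\mathcal P$ there is $g\in G$ with $P\subseteq gU$, and equisize if all sets in $\mathcal P$ have the same Haar measure. *)

theory Defs
  imports "HOL-Analysis.Analysis" "HOL-Library.Disjoint_Sets"
begin

(* A (group-)topological group is written additively via the class
   topological_group_add (group_add is NOT assumed commutative). *)
definition haar_measure :: "'a::{topological_group_add,t2_space} measure \<Rightarrow> bool" where
  "haar_measure \<nu> \<longleftrightarrow>
     sets \<nu> = sets borel \<and>
     (\<forall>g. \<forall>A\<in>sets borel. emeasure \<nu> ((\<lambda>x. g + x) ` A) = emeasure \<nu> A) \<and>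
     (\<forall>K. compact K \<longrightarrow> emeasure \<nu> K < \<infinity>) \<and>
     (\<forall>A\<in>sets borel. emeasure \<nu> A = (INF V\<in>{V. open V \<and> A \<subseteq> V}. emeasure \<nu> V)) \<and>
     (\<forall>V. open V \<longrightarrow> emeasure \<nu> V = (SUP K\<in>{K. compact K \<and> K \<subseteq> V}. emeasure \<nu> K))"

definition haar_measurable :: "'a measure \<Rightarrow> 'a set \<Rightarrow> bool" where
  "haar_measurable \<nu> A \<longleftrightarrow> A \<in> sets (completion \<nu>)"

definition U_fine :: "'a::plus set \<Rightarrow> 'a set set \<Rightarrow> bool" where
  "U_fine U \<P> \<longleftrightarrow> (\<forall>P\<in>\<P>. \<exists>g. P \<subseteq> (\<lambda>x. g + x) ` U)"

definition equisize :: "'a measure \<Rightarrow> 'a set set \<Rightarrow> bool" where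
  "equisize \<nu> \<P> \<longleftrightarrow> (\<forall>P\<in>\<P>. \<forall>Q\<in>\<P>. emeasure (completion \<nu>) P = emeasure (completion \<nu>) Q)"

end

theory Submission
  imports Defs
begin

lemma tr_vimage:
  fixes S :: "'a::group_add set"
  shows "(+) g ` S = (\<lambda>x. -g + x) -` S"
proof
  show "(\<lambda>x. -g + x) -` S \<subseteq> (+) g ` S"
  proof
    fix x assume "x \<in> (\<lambda>x. -g + x) -` S"
    then have "-g + x \<in> S" by simp
    moreover have "x = g + (-g + x)" by (simp add: add.assoc[symmetric])
    ultimately show "x \<in> (+) g ` S" by blast
  qed
qed (auto simp: add.assoc[symmetric])

lemma open_tr:
  fixes S :: "'a::topological_group_add set"
  assumes "open S" shows "open ((+) g ` S)"
proof -
  have "(+) g ` S = (\<lambda>x. -g + x) -` S" by (rule tr_vimage)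
  moreover have "continuous_on UNIV (\<lambda>x::'a. -g + x)"
    by (intro continuous_intros)
  ultimately show ?thesis using open_vimage[OF assms] by metis
qed

lemma borel_tr:
  fixes S :: "'a::{topological_group_add,t2_space} set"
  assumes "S \<in> sets borel" shows "(+) g ` S \<in> sets borel"
proof -
  have "(+) g ` S = (\<lambda>x. -g + x) -` S \<inter> space borel"
    using tr_vimage[of g S] by simp
  moreover have "(\<lambda>x::'a. -g + x) \<in> borel_measurable borel"
    by (intro borel_measurable_continuous_onI continuous_intros)
  ultimately show ?thesis using measurable_sets[OF _ assms] by metis
qed

lemma nbhd_half:
  fixes O' :: "'a::topological_group_add set"
  assumes "open O'" "0 \<in> O'"
  shows "\<exists>V. open V \<and> 0 \<in> V \<and> (\<forall>x\<in>V. -x \<in> V) \<and> (\<forall>x\<in>V. \<forall>y\<in>V. x + y \<in> O')"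
proof -
  have "((\<lambda>p::'a\<times>'a. fst p + snd p) \<longlongrightarrow> fst (0::'a,0::'a) + snd (0::'a,0::'a)) (nhds (0,0))"
    by (intro tendsto_intros filterlim_ident)
  then have "eventually (\<lambda>p. fst p + snd p \<in> O') (nhds (0::'a,0::'a))"
    using assms by (auto dest!: topological_tendstoD)
  then obtain Q where Q: "eventually Q (nhds (0::'a))" "\<forall>x y. Q x \<longrightarrow> Q y \<longrightarrow> x + y \<in> O'"
    unfolding nhds_prod eventually_prod_same by auto
  then obtain S where S: "open S" "0 \<in> S" "\<forall>x\<in>S. Q x" unfolding eventually_nhds by auto
  define V where "V = S \<inter> uminus -` S"
  have "open V" unfolding V_def
    by (intro open_Int S open_vimage continuous_intros)
  then show ?thesis using S Q by (intro exI[of _ V]) (auto simp: V_def)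
qed


locale hctx = finite_measure M for M :: "'a::{topological_group_add,t2_space} measure" +
  assumes sM: "sets M = sets borel" and one: "emeasure M UNIV = 1"
    and invM: "\<And>g A. A \<in> sets borel \<Longrightarrow> emeasure M ((+) g ` A) = emeasure M A"
    and outer: "\<And>A. A \<in> sets borel \<Longrightarrow> emeasure M A = (INF V\<in>{V. open V \<and> A \<subseteq> V}. emeasure M V)"
    and cptG: "compact (UNIV :: 'a set)"
    and nondisc: "\<not> (\<forall>S :: 'a set. open S)"
begin

lemma spM[simp]: "space M = UNIV"
  using sets_eq_imp_space_eq[OF sM] by simp

lemma open_sets[intro]: "open S \<Longrightarrow> S \<in> sets M"
  by (simp add: sM)

lemma inv: "A \<in> sets M \<Longrightarrow> measure M ((+) g ` A) = measure M A"
  using invM[of A g] sM by (simp add: measure_def)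

lemma measUNIV[simp]: "measure M UNIV = 1"
  using one emeasure_eq_measure[of UNIV] by simp

lemma pos_open:
  assumes "open O'" "x \<in> O'" shows "measure M O' > 0"
proof (rule ccontr)
  assume "\<not> measure M O' > 0"
  then have z: "measure M O' = 0" using measure_nonneg[of M O'] by linarith
  define O2 where "O2 = (+) (-x) ` O'"
  have "open O2" unfolding O2_def by (rule open_tr[OF assms(1)])
  have "x \<in> O'" by fact
  then have "-x + x \<in> O2" unfolding O2_def by (rule imageI)
  then have "0 \<in> O2" by simp
  have m2: "measure M O2 = 0" unfolding O2_def using inv[of O' "-x"] assms(1) z by auto
  have "UNIV \<subseteq> (\<Union>y\<in>UNIV. (+) y ` O2)"
  proof
    fix z :: 'a have "z = z + 0" by simp
    then show "z \<in> (\<Union>y\<in>UNIV. (+) y ` O2)" using \<open>0 \<in> O2\<close> by blast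
  qed
  moreover have "\<And>T. T \<in> UNIV \<Longrightarrow> open ((+) T ` O2)" using open_tr[OF \<open>open O2\<close>] by blast
  ultimately obtain C where C: "finite C" "UNIV \<subseteq> (\<Union>y\<in>C. (+) y ` O2)"
    using compactE_image[OF cptG, of UNIV "\<lambda>y. (+) y ` O2"] by metis
  have opn: "open ((+) y ` O2)" for y using open_tr[OF \<open>open O2\<close>] by blast
  have "measure M UNIV \<le> measure M (\<Union>y\<in>C. (+) y ` O2)"
    using C(2) by (intro finite_measure_mono) (simp_all add: open_sets opn open_UN)
  also have "\<dots> \<le> (\<Sum>y\<in>C. measure M ((+) y ` O2))"
    using C(1) by (intro finite_measure_subadditive_finite) (auto simp: open_sets opn)
  also have "\<dots> = 0" using inv[of O2] open_sets[OF \<open>open O2\<close>] m2 by simp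
  finally show False by simp
qed

lemma sing_zero: "measure M {x} = 0"
proof (rule ccontr)
  assume ne: "measure M {x} \<noteq> 0"
  have eq: "measure M {y} = measure M {x}" for y
  proof -
    have "{y} = (+) (y - x) ` {x}" by simp
    then show ?thesis using inv[of "{x}" "y - x"] by (simp add: sM)
  qed
  define d where "d = measure M {x}"
  have "d > 0" using ne measure_nonneg[of M "{x}"] unfolding d_def by linarith
  have fin: "finite (UNIV :: 'a set)"
  proof (rule ccontr)
    assume "infinite (UNIV :: 'a set)"
    then obtain B :: "'a set" where B: "finite B" "card B = nat \<lceil>2 / d\<rceil>"
      using infinite_arbitrarily_large by blast
    have "measure M B = (\<Sum>y\<in>B. measure M {y})"
      using B by (intro finite_measure_eq_sum_singleton) (auto simp: sM)
    also have "\<dots> = (\<Sum>y\<in>B. d)" using eq unfolding d_def by (intro sum.cong) auto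
    also have "\<dots> = real (card B) * d" by simp
    finally have "measure M B = real (card B) * d" .
    moreover have "real (card B) \<ge> 2 / d" using B by linarith
    then have "real (card B) * d \<ge> 2" using \<open>d > 0\<close> by (simp add: field_simps)
    moreover have "measure M B \<le> 1" using bounded_measure[of B] by simp
    ultimately show False by simp
  qed
  have "open S" for S :: "'a set"
  proof -
    have "finite (- S)" using fin by (rule finite_subset[rotated]) simp
    then have "closed (- S)" by (rule finite_imp_closed)
    then show ?thesis by (simp add: closed_def)
  qed
  then show False using nondisc by blast
qed

lemma small_open:
  assumes "e > 0" shows "\<exists>O'. open O' \<and> 0 \<in> O' \<and> measure M O' < e"
proof -
  have "emeasure M {0} = 0" using sing_zero emeasure_eq_measure by simp
  then have "(INF V\<in>{V. open V \<and> {0} \<subseteq> V}. emeasure M V) < ennreal e"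
    using outer[of "{0}"] assms by simp
  then obtain V where "open V" "0 \<in> V" "emeasure M V < ennreal e"
    unfolding INF_less_iff by auto
  then show ?thesis using assms by (intro exI[of _ V]) (auto simp: emeasure_eq_measure ennreal_less_iff)
qed


lemma small_cover:
  assumes "e > 0"
  shows "\<exists>os. \<Union>(set os) = UNIV \<and> (\<forall>O'\<in>set os. open O' \<and> measure M O' < e)"
proof -
  obtain O' where O': "open O'" "0 \<in> O'" "measure M O' < e" using small_open[OF assms] by blast
  have "UNIV \<subseteq> (\<Union>y\<in>UNIV. (+) y ` O')"
  proof
    fix z :: 'a have "z = z + 0" by simp
    then show "z \<in> (\<Union>y\<in>UNIV. (+) y ` O')" using \<open>0 \<in> O'\<close> by blast
  qed
  moreover have "\<And>T. T \<in> UNIV \<Longrightarrow> open ((+) T ` O')" using open_tr[OF \<open>open O'\<close>] by blast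
  ultimately obtain C where C: "finite C" "UNIV \<subseteq> (\<Union>y\<in>C. (+) y ` O')"
    using compactE_image[OF cptG, of UNIV "\<lambda>y. (+) y ` O'"] by metis
  obtain ys where ys: "set ys = C" using finite_list[OF C(1)] by blast
  have "\<Union> (set (map ((\<lambda>y. (+) y ` O')) ys)) = UNIV" using C(2) ys by auto
  moreover have "open P \<and> measure M P < e" if "P \<in> set (map (\<lambda>y. (+) y ` O') ys)" for P
  proof -
    from that obtain y where "P = (+) y ` O'" unfolding set_map by blast
    then show "open P \<and> measure M P < e"
      using open_tr[OF \<open>open O'\<close>] inv[of O' y] open_sets[OF \<open>open O'\<close>] O' by simp
  qed
  ultimately show ?thesis by blast
qed

lemma discrete_ivt:
  fixes f :: "nat \<Rightarrow> real"
  shows "f 0 \<le> t \<Longrightarrow> t < f n \<Longrightarrow> \<exists>j<n. f j \<le> t \<and> t < f (Suc j)"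
proof (induction n)
  case 0 then show ?case by simp
next
  case (Suc n)
  show ?case
  proof (cases "t < f n")
    case True then show ?thesis using Suc by (metis less_SucI)
  next
    case False then show ?thesis using Suc by auto
  qed
qed

lemma iv_step:
  assumes A: "A \<in> sets M" and B: "B \<in> sets M" "B \<subseteq> A" "measure M B \<le> t"
    and t: "t \<le> measure M A" and e: "e > 0"
  shows "\<exists>B'. B' \<in> sets M \<and> B \<subseteq> B' \<and> B' \<subseteq> A \<and> measure M B' \<le> t \<and> t - measure M B' < e"
proof (cases "t = measure M A")
  case True then show ?thesis using A B e by (intro exI[of _ A]) auto
next
  case False
  then have tA: "t < measure M A" using t by simp
  obtain os where os: "\<Union>(set os) = UNIV" "\<forall>O'\<in>set os. open O' \<and> measure M O' < e"
    using small_cover[OF e] by blast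
  define C where "C j = B \<union> (A \<inter> \<Union>(set (take j os)))" for j
  have Cs: "C j \<in> sets M" for j
  proof -
    have "\<Union>(set (take j os)) \<in> sets M"
      using os(2) by (intro open_sets open_Union) (auto dest: in_set_takeD)
    then show ?thesis unfolding C_def using A B by auto
  qed
  define f where "f j = measure M (C j)" for j
  have "f 0 \<le> t" using B unfolding f_def C_def by simp
  moreover have "C (length os) = A" using os(1) B unfolding C_def by auto
  then have "t < f (length os)" using tA unfolding f_def by simp
  ultimately obtain j where j: "j < length os" "f j \<le> t" "t < f (Suc j)"
    using discrete_ivt[of f t "length os"] by blast
  have "C (Suc j) = C j \<union> (A \<inter> os ! j)"
    unfolding C_def using j(1) by (auto simp: take_Suc_conv_app_nth)
  moreover have "os ! j \<in> set os" using j(1) by simp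
  then have oj: "open (os ! j)" "measure M (os ! j) < e" using os(2) by auto
  ultimately have "f (Suc j) \<le> f j + measure M (A \<inter> os ! j)"
    unfolding f_def using Cs A open_sets[OF oj(1)] by (simp add: measure_Un_le)
  moreover have "measure M (A \<inter> os ! j) \<le> measure M (os ! j)"
    using open_sets[OF oj(1)] by (intro finite_measure_mono) auto
  ultimately have "t - f j < e" using j oj by linarith
  moreover have "B \<subseteq> C j" "C j \<subseteq> A" using B unfolding C_def by auto
  ultimately show ?thesis using Cs j unfolding f_def by blast
qed

lemma iv:
  assumes A: "A \<in> sets M" and t: "0 \<le> t" "t \<le> measure M A"
  shows "\<exists>B. B \<in> sets M \<and> B \<subseteq> A \<and> measure M B = t"
proof -
  define P where "P n B \<longleftrightarrow> B \<in> sets M \<and> B \<subseteq> A \<and> measure M B \<le> t \<and> t - measure M B < inverse (real (Suc n))" for n B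
  have "\<exists>B. P 0 B"
    using iv_step[OF A _ _ _ t(2), of "{}" 1] t(1) unfolding P_def by auto
  moreover have "\<exists>B'. P (Suc n) B' \<and> B \<subseteq> B'" if "P n B" for n B
    using that iv_step[OF A _ _ _ t(2), of B "inverse (real (Suc (Suc n)))"] unfolding P_def by auto
  ultimately obtain F where F: "\<And>n. P n (F n)" "\<And>n. F n \<subseteq> F (Suc n)"
    using dependent_nat_choice[of P "\<lambda>n B B'. B \<subseteq> B'"] by blast
  have inc: "incseq F" using F(2) by (rule incseq_SucI)
  have rng: "range F \<subseteq> sets M" using F(1) unfolding P_def by auto
  have l1: "(\<lambda>n. measure M (F n)) \<longlonglongrightarrow> measure M (\<Union>n. F n)"
    by (rule finite_Lim_measure_incseq[OF rng inc])
  have l2: "(\<lambda>n. measure M (F n)) \<longlonglongrightarrow> t"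
  proof (rule tendsto_sandwich)
    have "t - inverse (real (Suc n)) \<le> measure M (F n)" for n
      using F(1)[of n] unfolding P_def by linarith
    then show "\<forall>\<^sub>F n in sequentially. t - inverse (real (Suc n)) \<le> measure M (F n)"
      by (intro always_eventually allI)
    show "\<forall>\<^sub>F n in sequentially. measure M (F n) \<le> t"
      using F(1) unfolding P_def by auto
    show "(\<lambda>n. t - inverse (real (Suc n))) \<longlonglongrightarrow> t"
      using tendsto_diff[OF tendsto_const LIMSEQ_inverse_real_of_nat, of t] by simp
  qed (rule tendsto_const)
  have "measure M (\<Union>n. F n) = t" using LIMSEQ_unique[OF l1 l2] .
  moreover have "(\<Union>n. F n) \<in> sets M" using rng by auto
  moreover have "(\<Union>n. F n) \<subseteq> A" using F(1) unfolding P_def by auto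
  ultimately show ?thesis by blast
qed


definition good :: "'a set \<Rightarrow> real \<Rightarrow> 'a set set \<Rightarrow> bool" where
  "good X c PP \<longleftrightarrow> finite PP \<and> \<Union>PP = X \<and> disjoint PP \<and> (\<forall>P\<in>PP. P \<in> sets M \<and> measure M P = c)"

lemma good_single: "P \<in> sets M \<Longrightarrow> measure M P = c \<Longrightarrow> good P c {P}"
  unfolding good_def by auto

lemma good_union:
  assumes "good X c A" "good Y c B" "X \<inter> Y = {}"
  shows "good (X \<union> Y) c (A \<union> B)"
proof -
  have "disjoint (A \<union> B)"
    unfolding pairwise_def disjnt_def
  proof (intro ballI impI)
    fix P Q assume PQ: "P \<in> A \<union> B" "Q \<in> A \<union> B" "P \<noteq> Q"
    have dA: "disjoint A" and dB: "disjoint B" and uA: "\<Union>A = X" and uB: "\<Union>B = Y"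
      using assms(1,2) unfolding good_def by auto
    show "P \<inter> Q = {}"
    proof (cases "P \<in> A")
      case True
      show ?thesis
      proof (cases "Q \<in> A")
        case True with \<open>P \<in> A\<close> PQ dA show ?thesis unfolding pairwise_def disjnt_def by blast
      next
        case False then have "Q \<in> B" using PQ by auto
        then show ?thesis using \<open>P \<in> A\<close> uA uB assms(3) by blast
      qed
    next
      case False then have "P \<in> B" using PQ by auto
      show ?thesis
      proof (cases "Q \<in> B")
        case True with \<open>P \<in> B\<close> PQ dB show ?thesis unfolding pairwise_def disjnt_def by blast
      next
        case False then have "Q \<in> A" using PQ by auto
        then show ?thesis using \<open>P \<in> B\<close> uA uB assms(3) by blast
      qed
    qed
  qed
  then show ?thesis using assms unfolding good_def by auto
qed

lemma good_sets: "good X c PP \<Longrightarrow> X \<in> sets M"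
  unfolding good_def by (metis sets.finite_Union subsetI)

lemma eqdiv:
  assumes "c > 0"
  shows "A \<in> sets M \<Longrightarrow> measure M A = real (Suc j) * c \<Longrightarrow> \<exists>PP. good A c PP"
proof (induction j arbitrary: A)
  case 0 then show ?case using good_single[of A c] by auto
next
  case (Suc j)
  obtain B where B: "B \<in> sets M" "B \<subseteq> A" "measure M B = c"
    using iv[OF Suc.prems(1), of c] Suc.prems(2) assms by auto
  have "measure M (A - B) = real (Suc j) * c"
    using finite_measure_Diff[OF Suc.prems(1) B(1,2)] B(3) Suc.prems(2) by (simp add: algebra_simps)
  then obtain PP where "good (A - B) c PP" using Suc.IH[of "A - B"] Suc.prems(1) B(1) by auto
  then have "good (B \<union> (A - B)) c ({B} \<union> PP)"
    by (intro good_union good_single B) auto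
  moreover have "B \<union> (A - B) = A" using B by auto
  ultimately show ?case by auto
qed

lemma chop:
  assumes A: "A \<in> sets M" and c: "c > 0"
  shows "\<exists>PP R j. R \<in> sets M \<and> R \<subseteq> A \<and> measure M R < c \<and> good (A - R) c PP \<and> measure M (A - R) = real j * c"
proof -
  define j where "j = nat \<lfloor>measure M A / c\<rfloor>"
  have q0: "0 \<le> measure M A / c" using c measure_nonneg[of M A] by simp
  have rj: "real j = of_int \<lfloor>measure M A / c\<rfloor>" unfolding j_def using q0 by simp
  have "real j \<le> measure M A / c" using rj by (simp add: of_int_floor_le)
  then have jle: "real j * c \<le> measure M A" using c by (simp add: le_divide_eq)
  have jgt: "measure M A < real j * c + c"
  proof -
    have "measure M A / c < real j + 1" unfolding rj by linarith
    then show ?thesis using c by (simp add: field_simps)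
  qed
  show ?thesis
  proof (cases j)
    case 0
    then show ?thesis using A jgt unfolding good_def
      by (intro exI[of _ "{}"] exI[of _ A] exI[of _ 0]) auto
  next
    case (Suc j')
    obtain B where B: "B \<in> sets M" "B \<subseteq> A" "measure M B = real j * c"
      using iv[OF A, of "real j * c"] jle c by auto
    obtain PP where PP: "good B c PP" using eqdiv[OF c B(1)] B(3) Suc by auto
    have e: "A - (A - B) = B" using B by auto
    have "measure M (A - B) = measure M A - real j * c"
      using finite_measure_Diff[OF A B(1,2)] B(3) by simp
    then show ?thesis using A B PP jgt e
      by (intro exI[of _ PP] exI[of _ "A - B"] exI[of _ j]) auto
  qed
qed


lemma sum_list_meas_nonneg: "0 \<le> sum_list (map (measure M) Ss)"
  by (induction Ss) auto

lemma chunk: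
  fixes ok :: "'a set \<Rightarrow> bool"
  assumes c: "c > 0" and okmono: "\<And>P Q. ok P \<Longrightarrow> Q \<subseteq> P \<Longrightarrow> ok Q"
  shows "\<And>R S k. R \<in> sets M \<Longrightarrow> S \<in> sets M \<Longrightarrow> (\<forall>T\<in>set Ss. T \<in> sets M \<and> c \<le> measure M T)
    \<Longrightarrow> c \<le> measure M S \<Longrightarrow> measure M R < c
    \<Longrightarrow> sorted_wrt (\<lambda>X Y. X \<inter> Y = {}) (R # S # Ss)
    \<Longrightarrow> successively (\<lambda>X Y. ok (X \<union> Y)) (S # Ss) \<Longrightarrow> ok (R \<union> S)
    \<Longrightarrow> measure M R + measure M S + sum_list (map (measure M) Ss) = real k * c
    \<Longrightarrow> \<exists>PP. good (R \<union> S \<union> \<Union>(set Ss)) c PP \<and> (\<forall>P\<in>PP. ok P)"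
proof (induction Ss)
  case Nil
  note RS = Nil.prems
  have disjRS: "R \<inter> S = {}" using RS(6) by simp
  have mR: "0 \<le> measure M R" by simp
  have mRS: "measure M (R \<union> S) = measure M R + measure M S"
    using finite_measure_Union[OF RS(1,2) disjRS] .
  have kc: "measure M R + measure M S = real k * c" using RS(9) by simp
  show ?case
  proof (cases k)
    case 0 then show ?thesis using kc RS(4) c mR by simp
  next
    case (Suc k')
    show ?thesis
    proof (cases k')
      case 0
      then have "good (R \<union> S) c {R \<union> S}" using mRS kc Suc RS(1,2)
        by (intro good_single) auto
      then show ?thesis using RS(8) by auto
    next
      case (Suc k'')
      obtain B where B: "B \<in> sets M" "B \<subseteq> S" "measure M B = c - measure M R"
        using iv[OF RS(2), of "c - measure M R"] RS(4,5) mR by auto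
      have g1: "good (R \<union> B) c {R \<union> B}"
        using finite_measure_Union[OF RS(1) B(1)] disjRS B RS(1) by (intro good_single) auto
      have "measure M (S - B) = real (Suc k'') * c"
        using finite_measure_Diff[OF RS(2) B(1,2)] B(3) kc \<open>k = Suc k'\<close> Suc by (simp add: algebra_simps)
      then obtain PP where PP: "good (S - B) c PP" using eqdiv[OF c, of "S - B"] RS(2) B(1) by auto
      have "good ((R \<union> B) \<union> (S - B)) c ({R \<union> B} \<union> PP)"
        using disjRS by (intro good_union g1 PP) auto
      moreover have "(R \<union> B) \<union> (S - B) = R \<union> S \<union> \<Union>(set [])" using B by auto
      moreover have "\<forall>P\<in>{R \<union> B} \<union> PP. ok P"
      proof
        fix P assume "P \<in> {R \<union> B} \<union> PP"
        then have "P \<subseteq> R \<union> S" using PP B unfolding good_def by auto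
        then show "ok P" using okmono[OF RS(8)] by blast
      qed
      ultimately show ?thesis by metis
    qed
  qed
next
  case (Cons T Ss')
  note RS = Cons.prems
  have disjRS: "R \<inter> S = {}" using RS(6) by simp
  have mR: "0 \<le> measure M R" by simp
  have T: "T \<in> sets M" "c \<le> measure M T" using RS(3) by auto
  obtain B where B: "B \<in> sets M" "B \<subseteq> S" "measure M B = c - measure M R"
    using iv[OF RS(2), of "c - measure M R"] RS(4,5) mR by auto
  have g1: "good (R \<union> B) c {R \<union> B}"
    using finite_measure_Union[OF RS(1) B(1)] disjRS B RS(1) by (intro good_single) auto
  have SB: "S - B \<in> sets M" using RS(2) B(1) by auto
  obtain PP1 R' j where R': "R' \<in> sets M" "R' \<subseteq> S - B" "measure M R' < c"
      "good ((S - B) - R') c PP1" "measure M ((S - B) - R') = real j * c"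
    using chop[OF SB c] by blast
  have mSB: "measure M (S - B) = measure M S - (c - measure M R)"
    using finite_measure_Diff[OF RS(2) B(1,2)] B(3) by simp
  have mSBR: "measure M ((S - B) - R') = measure M (S - B) - measure M R'"
    using finite_measure_Diff[OF SB R'(1,2)] .
  define rest where "rest = measure M T + sum_list (map (measure M) Ss')"
  have rest0: "0 \<le> rest" unfolding rest_def using sum_list_meas_nonneg[of Ss'] by simp
  have tot: "measure M R + measure M S + rest = real k * c" using RS(9) unfolding rest_def by simp
  have eq: "measure M R' + rest = real k * c - c - real j * c"
    using tot mSB mSBR R'(5) by simp
  have "real j * c + c \<le> real k * c" using eq rest0 measure_nonneg[of M R'] by linarith
  then have "real (Suc j) * c \<le> real k * c" by (simp add: algebra_simps)
  then have "real (Suc j) \<le> real k" using c by (rule mult_right_le_imp_le)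
  then have jk: "Suc j \<le> k" by simp
  have eq2: "measure M R' + measure M T + sum_list (map (measure M) Ss') = real (k - Suc j) * c"
    using eq jk unfolding rest_def by (simp add: of_nat_diff algebra_simps)
  have sw: "sorted_wrt (\<lambda>X Y. X \<inter> Y = {}) (R' # T # Ss')"
    using RS(6) R'(2) by (auto 0 3)
  have sc: "successively (\<lambda>X Y. ok (X \<union> Y)) (T # Ss')" using RS(7) by simp
  have okST: "ok (S \<union> T)" using RS(7) by simp
  have okRT: "ok (R' \<union> T)" using okmono[OF okST] R'(2) by blast
  obtain PP2 where PP2: "good (R' \<union> T \<union> \<Union>(set Ss')) c PP2" "\<forall>P\<in>PP2. ok P"
    using Cons.IH[OF R'(1) T(1) _ T(2) R'(3) sw sc okRT eq2] RS(3) by auto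
  have "good ((R \<union> B) \<union> ((S - B) - R') \<union> (R' \<union> T \<union> \<Union>(set Ss'))) c ({R \<union> B} \<union> PP1 \<union> PP2)"
  proof (intro good_union g1 R'(4) PP2(1))
    show "(R \<union> B) \<inter> (S - B - R') = {}" using disjRS by auto
    show "(R \<union> B \<union> (S - B - R')) \<inter> (R' \<union> T \<union> \<Union> (set Ss')) = {}"
    proof -
      have "\<forall>X\<in>set Ss'. S \<inter> X = {}" "\<forall>X\<in>set Ss'. R \<inter> X = {}" "R \<inter> T = {}" "S \<inter> T = {}"
        using RS(6) by auto
      then have a: "(R \<union> S) \<inter> T = {}" "(R \<union> S) \<inter> \<Union>(set Ss') = {}" by auto
      have L: "R \<union> B \<union> (S - B - R') \<subseteq> (R \<union> S) - R'" using B(2) R'(2) disjRS by auto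
      show ?thesis using a L by auto
    qed
  qed
  moreover have "(R \<union> B) \<union> ((S - B) - R') \<union> (R' \<union> T \<union> \<Union>(set Ss')) = R \<union> S \<union> \<Union>(set (T # Ss'))"
    using B(2) R'(2) by auto
  moreover have "\<forall>P\<in>{R \<union> B} \<union> PP1 \<union> PP2. ok P"
  proof
    fix P assume P: "P \<in> {R \<union> B} \<union> PP1 \<union> PP2"
    show "ok P"
    proof (cases "P \<in> PP2")
      case True then show ?thesis using PP2(2) by auto
    next
      case False
      then have "P \<subseteq> R \<union> S" using P R'(4) B unfolding good_def by auto
      then show "ok P" using okmono[OF RS(8)] by blast
    qed
  qed
  ultimately show ?case by metis
qed

end


lemma tr_mem: "(z::'a::group_add) \<in> (+) a ` S \<longleftrightarrow> -a + z \<in> S"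
  using tr_vimage[of a S] by simp

fun vp :: "'a::group_add set \<Rightarrow> nat \<Rightarrow> 'a set" where
  "vp V 0 = {0}"
| "vp V (Suc n) = {a + b | a b. a \<in> vp V n \<and> b \<in> V}"

lemma vp_add: "x \<in> vp V n \<Longrightarrow> y \<in> vp V m \<Longrightarrow> x + y \<in> vp V (n + m)"
proof (induction m arbitrary: y)
  case 0 then show ?case by simp
next
  case (Suc m)
  then obtain a b where "y = a + b" "a \<in> vp V m" "b \<in> V" by auto
  then have "x + a \<in> vp V (n + m)" using Suc by blast
  then have "(x + a) + b \<in> vp V (Suc (n + m))" using \<open>b \<in> V\<close> unfolding vp.simps by blast
  then show ?case using \<open>y = a + b\<close> by (simp add: add.assoc)
qed

lemma vp_V: "v \<in> V \<Longrightarrow> v \<in> vp V (Suc 0)"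
  by force

lemma vp1: "x \<in> vp V (Suc 0) \<Longrightarrow> x \<in> V"
  by auto

lemma vp_Suc: "0 \<in> V \<Longrightarrow> x \<in> vp V n \<Longrightarrow> x \<in> vp V (Suc n)"
  by auto (metis add_0_right)

lemma vp_mono:
  assumes "0 \<in> V" "x \<in> vp V n" "n \<le> m" shows "x \<in> vp V m"
  using assms(3)
proof (induction rule: dec_induct)
  case base show ?case by (rule assms(2))
next
  case (step k) show ?case by (rule vp_Suc[OF assms(1) step.IH])
qed

lemma vp_neg: "(\<forall>x\<in>V. -x \<in> V) \<Longrightarrow> x \<in> vp V n \<Longrightarrow> -x \<in> vp V n"
proof (induction n arbitrary: x)
  case 0 then show ?case by simp
next
  case (Suc n)
  then obtain a b where ab: "x = a + b" "a \<in> vp V n" "b \<in> V" by auto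
  have "-b \<in> vp V (Suc 0)" using Suc.prems(1) ab(3) by (intro vp_V) auto
  moreover have "-a \<in> vp V n" using Suc ab by auto
  ultimately have "-b + -a \<in> vp V (Suc 0 + n)" by (rule vp_add)
  then show ?case using ab by (simp add: minus_add)
qed

lemma vp_double:
  assumes "\<forall>a\<in>V. \<forall>b\<in>V. a + b \<in> W"
  shows "x \<in> vp V (2 * n) \<Longrightarrow> x \<in> vp W n"
proof (induction n arbitrary: x)
  case 0 then show ?case by simp
next
  case (Suc n)
  have "2 * Suc n = Suc (Suc (2 * n))" by simp
  then obtain y a b where "x = (y + a) + b" "y \<in> vp V (2 * n)" "a \<in> V" "b \<in> V"
    using Suc.prems by auto
  then have "x = y + (a + b)" "y \<in> vp W n" "a + b \<in> W" using Suc.IH assms by (auto simp: add.assoc)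
  then show ?case by auto
qed

definition hsub :: "'a::group_add set \<Rightarrow> 'a set" where
  "hsub V = (\<Union>n. vp V n)"

lemma hsub_add: "x \<in> hsub V \<Longrightarrow> y \<in> hsub V \<Longrightarrow> x + y \<in> hsub V"
  unfolding hsub_def using vp_add by blast

lemma hsub_neg: "(\<forall>x\<in>V. -x \<in> V) \<Longrightarrow> x \<in> hsub V \<Longrightarrow> -x \<in> hsub V"
  unfolding hsub_def using vp_neg by blast

lemma hsub_0: "0 \<in> hsub V"
  unfolding hsub_def by (metis UN_I UNIV_I insertI1 vp.simps(1))

lemma hsub_vp: "x \<in> vp V n \<Longrightarrow> x \<in> hsub V"
  unfolding hsub_def by blast

lemma hsub_open:
  fixes V :: "'a::topological_group_add set"
  assumes "open V" "0 \<in> V" shows "open (hsub V)"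
  unfolding open_subopen[of "hsub V"]
proof
  fix x assume "x \<in> hsub V"
  then obtain n where n: "x \<in> vp V n" unfolding hsub_def by auto
  have "(+) x ` V \<subseteq> hsub V"
  proof
    fix z assume "z \<in> (+) x ` V"
    then obtain v where "z = x + v" "v \<in> V" by auto
    then have "z \<in> vp V (n + Suc 0)" using vp_add[OF n vp_V] by auto
    then show "z \<in> hsub V" by (rule hsub_vp)
  qed
  moreover have "x \<in> (+) x ` V" using assms(2) by (metis add_0_right imageI)
  ultimately show "\<exists>T. open T \<and> x \<in> T \<and> T \<subseteq> hsub V" using open_tr[OF assms(1)] by blast
qed

lemma coset_eq:
  assumes sym: "\<forall>x\<in>V. -x \<in> V" and "z \<in> (+) a ` hsub V" "z \<in> (+) b ` hsub V"
  shows "(+) a ` hsub V = (+) b ` hsub V"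
proof -
  have ha: "-a + z \<in> hsub V" and hb: "-b + z \<in> hsub V" using assms by (auto simp: tr_mem)
  have "-a + b \<in> hsub V"
  proof -
    have "-a + b = (-a + z) + -(-b + z)" by (simp add: add.assoc minus_add)
    then show ?thesis using hsub_add[OF ha hsub_neg[OF sym hb]] by simp
  qed
  then have "-b + a \<in> hsub V" using hsub_neg[OF sym] by (metis minus_add minus_minus)
  have sub: "(+) p ` hsub V \<subseteq> (+) q ` hsub V" if "-q + p \<in> hsub V" for p q
  proof
    fix y assume "y \<in> (+) p ` hsub V"
    then have "-p + y \<in> hsub V" by (simp add: tr_mem)
    then have "(-q + p) + (-p + y) \<in> hsub V" using hsub_add that by blast
    then show "y \<in> (+) q ` hsub V" by (simp add: tr_mem add.assoc)
  qed
  show ?thesis using sub[OF \<open>-a + b \<in> hsub V\<close>] sub[OF \<open>-b + a \<in> hsub V\<close>] by blast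
qed


lemma path_exists:
  fixes R :: "nat \<Rightarrow> nat \<Rightarrow> bool"
  assumes "(\<lambda>i j. i < n \<and> j < n \<and> R i j)\<^sup>*\<^sup>* x y"
  shows "\<exists>q. successively R (x # q) \<and> last (x # q) = y \<and> set q \<subseteq> {..<n}"
  using assms
proof (induction rule: rtranclp_induct)
  case base
  then show ?case by (intro exI[of _ "[]"]) auto
next
  case (step y z)
  then obtain q where q: "successively R (x # q)" "last (x # q) = y" "set q \<subseteq> {..<n}" by blast
  have "successively R ((x # q) @ [z])"
    unfolding successively_append_iff using q step(2) by auto
  moreover have "last (x # q @ [z]) = z" by simp
  ultimately show ?case using q step(2) by (intro exI[of _ "q @ [z]"]) auto
qed

lemma rtranclp_sym:
  assumes sym: "\<And>i j. R i j \<Longrightarrow> R j i"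
  shows "R\<^sup>*\<^sup>* a b \<Longrightarrow> R\<^sup>*\<^sup>* b a"
proof (induction rule: rtranclp_induct)
  case base then show ?case by simp
next
  case (step y z)
  then show ?case using sym by (meson converse_rtranclp_into_rtranclp)
qed

lemma walk_exists:
  fixes R :: "nat \<Rightarrow> nat \<Rightarrow> bool"
  assumes n: "n > 0" and sym: "\<And>i j. R i j \<Longrightarrow> R j i"
    and conn: "\<And>j. j < n \<Longrightarrow> (\<lambda>i j. i < n \<and> j < n \<and> R i j)\<^sup>*\<^sup>* 0 j"
  shows "\<exists>w. w \<noteq> [] \<and> set w = {..<n} \<and> successively R w"
proof -
  let ?Rn = "\<lambda>i j. i < n \<and> j < n \<and> R i j"
  have symn: "?Rn i j \<Longrightarrow> ?Rn j i" for i j using sym by blast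
  have main: "set xs \<subseteq> {..<n} \<Longrightarrow> \<exists>w. w \<noteq> [] \<and> hd w = 0 \<and> set w \<subseteq> {..<n} \<and> set xs \<subseteq> set w \<and> successively R w" for xs
  proof (induction xs)
    case Nil then show ?case using n by (intro exI[of _ "[0]"]) auto
  next
    case (Cons x xs)
    then obtain w where w: "w \<noteq> []" "hd w = 0" "set w \<subseteq> {..<n}" "set xs \<subseteq> set w" "successively R w" by auto
    have lw: "last w < n" using w(1,3) last_in_set by blast
    have x: "x < n" using Cons.prems by auto
    have "?Rn\<^sup>*\<^sup>* (last w) 0" using rtranclp_sym[of ?Rn, OF symn conn[OF lw]] by blast
    then have "?Rn\<^sup>*\<^sup>* (last w) x" using conn[OF x] by (rule rtranclp_trans)
    then obtain q where q: "successively R (last w # q)" "last (last w # q) = x" "set q \<subseteq> {..<n}"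
      using path_exists by blast
    have "successively R (w @ q)"
      unfolding successively_append_iff using q(1) w(5) by (auto simp: successively_Cons)
    moreover have "x \<in> set (w @ q)"
    proof (cases q)
      case Nil then show ?thesis using q(2) w(1) last_in_set[of w] by simp
    next
      case (Cons a q') then show ?thesis using q(2) by (metis last.simps last_in_set list.distinct(1) set_append Un_iff)
    qed
    ultimately show ?case using w q(3) by (intro exI[of _ "w @ q"]) auto
  qed
  obtain w where w: "w \<noteq> []" "set w \<subseteq> {..<n}" "set [0..<n] \<subseteq> set w" "successively R w"
    using main[of "[0..<n]"] by (auto simp: atLeast0LessThan)
  then show ?thesis by (intro exI[of _ w]) (auto simp: atLeast0LessThan)
qed


context hctx begin

lemma eqdiv_index:
  assumes "finite I" "I \<noteq> {}"
  shows "A \<in> sets M \<Longrightarrow> \<exists>P. (\<forall>i\<in>I. P i \<in> sets M \<and> measure M (P i) = measure M A / card I)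
      \<and> disjoint_family_on P I \<and> (\<Union>i\<in>I. P i) = A"
  using assms
proof (induction I arbitrary: A rule: finite_ne_induct)
  case (singleton i)
  then show ?case by (intro exI[of _ "\<lambda>_. A"]) (auto simp: disjoint_family_on_def)
next
  case (insert i I)
  define m where "m = card I"
  have m0: "m > 0" using insert.hyps(1,2) unfolding m_def by auto
  have ci: "card (insert i I) = Suc m" using insert.hyps unfolding m_def by simp
  have mA: "0 \<le> measure M A" by simp
  obtain B where B: "B \<in> sets M" "B \<subseteq> A" "measure M B = measure M A / Suc m"
    using iv[OF insert.prems(1), of "measure M A / Suc m"] mA
    by (auto simp: divide_le_eq_1 field_simps intro: mult_left_le)
  have AB: "A - B \<in> sets M" using insert.prems B by auto
  obtain P where P: "\<forall>j\<in>I. P j \<in> sets M \<and> measure M (P j) = measure M (A - B) / card I"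
      "disjoint_family_on P I" "(\<Union>j\<in>I. P j) = A - B"
    using insert.IH[OF AB] by blast
  have "measure M (A - B) = measure M A - measure M A / Suc m"
    using finite_measure_Diff[OF insert.prems B(1,2)] B(3) by simp
  then have mAB: "measure M (A - B) / card I = measure M A / Suc m"
    using m0 unfolding m_def[symmetric] by (simp add: field_simps)
  define P' where "P' j = (if j = i then B else P j)" for j
  have "\<forall>j\<in>insert i I. P' j \<in> sets M \<and> measure M (P' j) = measure M A / card (insert i I)"
    using P(1) B mAB ci unfolding P'_def by auto
  moreover have "disjoint_family_on P' (insert i I)"
    using P(2,3) insert.hyps(3) unfolding P'_def disjoint_family_on_def by auto
  moreover have "(\<Union>j\<in>insert i I. P' j) = A"
  proof -
    have "(\<Union>j\<in>I. P' j) = (\<Union>j\<in>I. P j)"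
      unfolding P'_def by (rule SUP_cong) (use insert.hyps(3) in auto)
    moreover have "(\<Union>j\<in>insert i I. P' j) = P' i \<union> (\<Union>j\<in>I. P' j)" by simp
    moreover have "P' i = B" unfolding P'_def by simp
    ultimately have "(\<Union>j\<in>insert i I. P' j) = B \<union> (\<Union>j\<in>I. P j)" by simp
    then show ?thesis using P(3) B(2) by auto
  qed
  ultimately show ?case by blast
qed

lemma measure_list_union:
  "(\<forall>S\<in>set Ss. S \<in> sets M) \<Longrightarrow> sorted_wrt (\<lambda>X Y. X \<inter> Y = {}) Ss
    \<Longrightarrow> measure M (\<Union>(set Ss)) = sum_list (map (measure M) Ss)"
proof (induction Ss)
  case Nil then show ?case by simp
next
  case (Cons S Ss)
  have "measure M (S \<union> \<Union>(set Ss)) = measure M S + measure M (\<Union>(set Ss))"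
    using Cons.prems by (intro finite_measure_Union) auto
  then show ?case using Cons by simp
qed

end

locale hctxV = hctx M for M :: "'a::{topological_group_add,t2_space} measure" +
  fixes V :: "'a set"
  assumes openV: "open V" and V0: "0 \<in> V" and symV: "\<forall>x\<in>V. -x \<in> V"
begin

abbreviation "H \<equiv> hsub V"

lemma vp_open: "open (vp V (Suc n))"
proof -
  have "vp V (Suc n) = (\<Union>a\<in>vp V n. (+) a ` V)" by auto
  then show ?thesis using open_tr[OF openV] by auto
qed

lemma mV: "measure M V > 0" using pos_open[OF openV V0] .

lemma packing_set:
  "\<exists>F. F \<subseteq> H \<and> finite F \<and> F \<noteq> {} \<and> (\<forall>f\<in>F. \<forall>g\<in>F. f \<noteq> g \<longrightarrow> (+) f ` V \<inter> (+) g ` V = {})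
     \<and> (\<forall>h\<in>H. \<exists>f\<in>F. -f + h \<in> vp V 2)"
proof -
  define P where "P F \<longleftrightarrow> F \<subseteq> H \<and> finite F \<and> (\<forall>f\<in>F. \<forall>g\<in>F. f \<noteq> g \<longrightarrow> (+) f ` V \<inter> (+) g ` V = {})" for F
  define b where "b = nat \<lceil>1 / measure M V\<rceil> + 1"
  have bound: "card F < b" if "P F" for F
  proof -
    have "measure M (\<Union>f\<in>F. (+) f ` V) = (\<Sum>f\<in>F. measure M ((+) f ` V))"
      using that unfolding P_def
      by (intro finite_measure_finite_Union) (auto simp: disjoint_family_on_def intro!: open_sets open_tr openV)
    also have "\<dots> = real (card F) * measure M V" using inv[OF open_sets[OF openV]] by simp
    finally have "real (card F) * measure M V \<le> 1" using bounded_measure[of "\<Union>f\<in>F. (+) f ` V"] by simp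
    then have "real (card F) \<le> 1 / measure M V" using mV by (simp add: field_simps)
    then show ?thesis unfolding b_def by linarith
  qed
  have "P {0}" unfolding P_def using hsub_0 by auto
  then obtain F where F: "P F" "\<And>F'. P F' \<Longrightarrow> card F' \<le> card F"
    using ex_has_greatest_nat[of P "{0}" card b] bound by blast
  have cov: "\<exists>f\<in>F. -f + h \<in> vp V 2" if h: "h \<in> H" for h
  proof (rule ccontr)
    assume nc: "\<not> (\<exists>f\<in>F. -f + h \<in> vp V 2)"
    have dis: "(+) h ` V \<inter> (+) f ` V = {}" if "f \<in> F" for f
    proof (rule ccontr)
      assume "(+) h ` V \<inter> (+) f ` V \<noteq> {}"
      then obtain z where "z \<in> (+) h ` V" "z \<in> (+) f ` V" by blast
      then have z: "-h + z \<in> V" "-f + z \<in> V" by (auto simp only: tr_mem)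
      have "(-f + z) + -(-h + z) \<in> vp V (Suc 0 + Suc 0)"
        using vp_add[OF vp_V[OF z(2)] vp_V] z(1) symV by blast
      moreover have "(-f + z) + -(-h + z) = -f + h" by (simp add: add.assoc minus_add)
      moreover have "Suc 0 + Suc 0 = (2::nat)" by simp
      ultimately show False using nc that by metis
    qed
    have "h \<notin> F"
    proof
      assume "h \<in> F"
      have "h \<in> (+) h ` V" using V0 by (simp add: tr_mem)
      then show False using dis[OF \<open>h \<in> F\<close>] by blast
    qed
    have "P (insert h F)" using F(1) h dis unfolding P_def by (auto simp: Int_commute)
    then have "card (insert h F) \<le> card F" by (rule F(2))
    moreover have "card (insert h F) = Suc (card F)" using F(1) \<open>h \<notin> F\<close> unfolding P_def by simp
    ultimately show False by simp
  qed
  have "F \<noteq> {}" using cov[OF hsub_0] by auto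
  moreover have "\<forall>h\<in>H. \<exists>f\<in>F. -f + h \<in> vp V 2" using cov by blast
  moreover have "F \<subseteq> H" "finite F" "\<forall>f\<in>F. \<forall>g\<in>F. f \<noteq> g \<longrightarrow> (+) f ` V \<inter> (+) g ` V = {}"
    using F(1) unfolding P_def by auto
  ultimately show ?thesis by blast
qed

end


lemma vp2: "vp V 2 = vp V (Suc (Suc 0))" by (simp add: numeral_2_eq_2)

context hctxV begin

lemma V_vp2: assumes "x \<in> V" shows "x \<in> vp V 2"
  using vp_mono[OF V0 vp_V[OF assms], of 2] by simp

lemma vp_H: "x \<in> vp V k \<Longrightarrow> x \<in> H" by (rule hsub_vp)

lemma vp2_open: "open (vp V 2)" unfolding vp2 by (rule vp_open)

end

locale hctxF = hctxV M V for M :: "'a::{topological_group_add,t2_space} measure" and V +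
  fixes fs :: "'a list"
  assumes fs_ne: "fs \<noteq> []" and fs_H: "set fs \<subseteq> H"
    and pack: "\<And>i j. i < length fs \<Longrightarrow> j < length fs \<Longrightarrow> i \<noteq> j \<Longrightarrow> (+) (fs!i) ` V \<inter> (+) (fs!j) ` V = {}"
    and cover: "\<And>h. h \<in> H \<Longrightarrow> \<exists>i<length fs. -(fs!i) + h \<in> vp V 2"
begin

abbreviation "n \<equiv> length fs"

definition "Core = (\<Union>i<n. (+) (fs!i) ` V)"

definition "Q i = (+) (fs!i) ` V \<union> ((+) (fs!i) ` vp V 2 - Core - (\<Union>j<i. (+) (fs!j) ` vp V 2))"

lemma fsH: "i < n \<Longrightarrow> fs!i \<in> H" using fs_H by auto

lemma Q_sets: "Q i \<in> sets M"
proof -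
  have o1: "open ((+) (fs!i) ` V)" by (rule open_tr[OF openV])
  have o2: "open ((+) (fs!i) ` vp V 2)" by (rule open_tr[OF vp2_open])
  have o3: "open Core" unfolding Core_def by (intro open_UN ballI open_tr[OF openV])
  have o4: "open (\<Union>j<i. (+) (fs!j) ` vp V 2)" by (intro open_UN ballI open_tr[OF vp2_open])
  have "(+) (fs!i) ` vp V 2 - Core - (\<Union>j<i. (+) (fs!j) ` vp V 2) \<in> sets M"
    by (intro sets.Diff open_sets o2 o3 o4)
  then show ?thesis unfolding Q_def by (intro sets.Un open_sets[OF o1])
qed

lemma Q_sub: "Q i \<subseteq> (+) (fs!i) ` vp V 2"
  unfolding Q_def using V_vp2 by auto

lemma Q_H: "i < n \<Longrightarrow> Q i \<subseteq> H"
proof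
  fix x assume "i < n" "x \<in> Q i"
  then have "x \<in> (+) (fs!i) ` vp V 2" using Q_sub by blast
  then have "-(fs!i) + x \<in> vp V 2" by (simp add: tr_mem)
  then have "fs!i + (-(fs!i) + x) \<in> H" using hsub_add[OF fsH[OF \<open>i < n\<close>] vp_H] by blast
  then show "x \<in> H" by (simp add: add.assoc[symmetric])
qed

lemma Q_meas: "measure M (Q i) \<ge> measure M V"
proof -
  have "measure M ((+) (fs!i) ` V) \<le> measure M (Q i)"
    by (intro finite_measure_mono Q_sets) (auto simp: Q_def)
  then show ?thesis using inv[OF open_sets[OF openV]] by simp
qed

lemma Q_disj: assumes "i < n" "j < n" "i \<noteq> j" shows "Q i \<inter> Q j = {}"
proof -
  have a: "Q i \<inter> Q j = {}" if "i < j" "j < n" for i j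
  proof -
    have "i < n" using that by simp
    have "(+) (fs!i) ` V \<inter> (+) (fs!j) ` V = {}" using pack[OF \<open>i < n\<close> \<open>j < n\<close>] that by simp
    moreover have "(+) (fs!i) ` V \<subseteq> Core" "(+) (fs!j) ` V \<subseteq> Core"
      unfolding Core_def using that \<open>i < n\<close> by (auto intro!: UN_upper)
    moreover have "(+) (fs!i) ` vp V 2 \<subseteq> (\<Union>k<j. (+) (fs!k) ` vp V 2)" using that by (auto intro!: UN_upper)
    ultimately show ?thesis unfolding Q_def
      by (smt (verit) Diff_iff Int_emptyI UnE disjoint_iff subset_iff)
  qed
  show ?thesis
  proof (cases "i < j")
    case True then show ?thesis using a assms by blast
  next
    case False then have "j < i" using assms by simp
    then show ?thesis using a assms by blast
  qed
qed

lemma Q_cover: "(\<Union>i<n. Q i) = H"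
proof
  show "(\<Union>i<n. Q i) \<subseteq> H" using Q_H by blast
next
  show "H \<subseteq> (\<Union>i<n. Q i)"
  proof
    fix h assume h: "h \<in> H"
    show "h \<in> (\<Union>i<n. Q i)"
    proof (cases "h \<in> Core")
      case True
      then obtain i where "i < n" "h \<in> (+) (fs!i) ` V" unfolding Core_def by auto
      then show ?thesis unfolding Q_def by auto
    next
      case False
      define P where "P i \<longleftrightarrow> i < n \<and> -(fs!i) + h \<in> vp V 2" for i
      obtain i where "P i" using cover[OF h] unfolding P_def by blast
      define i0 where "i0 = (LEAST i. P i)"
      have P0: "P i0" unfolding i0_def using \<open>P i\<close> by (rule LeastI)
      have nb: "\<not> P j" if "j < i0" for j using not_less_Least[OF that[unfolded i0_def]] .
      have "h \<in> (+) (fs!i0) ` vp V 2" using P0 unfolding P_def by (simp add: tr_mem)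
      moreover have "h \<notin> (\<Union>j<i0. (+) (fs!j) ` vp V 2)"
      proof
        assume "h \<in> (\<Union>j<i0. (+) (fs!j) ` vp V 2)"
        then obtain j where j: "j < i0" "h \<in> (+) (fs!j) ` vp V 2" by blast
        then have "-(fs!j) + h \<in> vp V 2" by (simp add: tr_mem)
        moreover have "j < n" using j(1) P0 unfolding P_def by simp
        ultimately have "P j" unfolding P_def by simp
        then show False using nb[OF j(1)] by simp
      qed
      ultimately have "h \<in> Q i0" using False unfolding Q_def by (intro UnI2 DiffI)
      then show ?thesis using P0 unfolding P_def by blast
    qed
  qed
qed

definition "adj i j \<longleftrightarrow> -(fs!i) + fs!j \<in> vp V 5"

lemma adj_sym: "adj i j \<Longrightarrow> adj j i"
proof -
  assume "adj i j"
  then have "-(-(fs!i) + fs!j) \<in> vp V 5" unfolding adj_def by (rule vp_neg[OF symV])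
  moreover have "-(-(fs!i) + fs!j) = -(fs!j) + fs!i" by (simp add: minus_add)
  ultimately show "adj j i" unfolding adj_def by simp
qed

lemma conn: "j < n \<Longrightarrow> (\<lambda>i j. i < n \<and> j < n \<and> adj i j)\<^sup>*\<^sup>* 0 j"
proof -
  let ?Rn = "\<lambda>i j. i < n \<and> j < n \<and> adj i j"
  define Y where "Y = {h \<in> H. \<exists>i<n. ?Rn\<^sup>*\<^sup>* 0 i \<and> -(fs!i) + h \<in> vp V 2}"
  have step: "h + v \<in> Y" if "h \<in> Y" "v \<in> V" for h v
  proof -
    have "h \<in> H" "\<exists>i<n. ?Rn\<^sup>*\<^sup>* 0 i \<and> -(fs!i) + h \<in> vp V 2" using that(1) unfolding Y_def by simp_all
    then obtain i where i: "i < n" "?Rn\<^sup>*\<^sup>* 0 i" "-(fs!i) + h \<in> vp V 2" "h \<in> H" by blast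
    have hv: "h + v \<in> H" using hsub_add[OF i(4) vp_H[OF vp_V[OF that(2)]]] .
    then obtain j where j: "j < n" "-(fs!j) + (h + v) \<in> vp V 2" using cover by blast
    have "(-(fs!i) + h) + v \<in> vp V (2 + Suc 0)" by (rule vp_add[OF i(3) vp_V[OF that(2)]])
    moreover have "-(-(fs!j) + (h + v)) \<in> vp V 2" by (rule vp_neg[OF symV j(2)])
    ultimately have "((-(fs!i) + h) + v) + -(-(fs!j) + (h + v)) \<in> vp V ((2 + Suc 0) + 2)" by (rule vp_add)
    moreover have "((-(fs!i) + h) + v) + -(-(fs!j) + (h + v)) = -(fs!i) + (h + (v + (-v + (-h + fs!j))))"
      by (simp only: add.assoc minus_add minus_minus)
    moreover have "-(fs!i) + (h + (v + (-v + (-h + fs!j)))) = -(fs!i) + fs!j"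
      by (simp only: add_minus_cancel)
    moreover have "(2 + Suc 0) + 2 = (5::nat)" by simp
    ultimately have "adj i j" unfolding adj_def by simp
    then have "?Rn i j" using i(1) j(1) by simp
    then have "?Rn\<^sup>*\<^sup>* 0 j" by (rule rtranclp.rtrancl_into_rtrancl[OF i(2)])
    then have "\<exists>i<n. ?Rn\<^sup>*\<^sup>* 0 i \<and> -(fs!i) + (h + v) \<in> vp V 2" using j by blast
    then show ?thesis unfolding Y_def using hv by simp
  qed
  have all: "h + x \<in> Y" if "h \<in> Y" "x \<in> vp V k" for h x k
    using that(2)
  proof (induction k arbitrary: x)
    case 0 then show ?case using that(1) by simp
  next
    case (Suc k)
    then obtain a b where "x = a + b" "a \<in> vp V k" "b \<in> V" by auto
    then show ?case using step[OF Suc.IH[of a]] by (simp add: add.assoc)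
  qed
  have n0: "0 < n" using fs_ne by simp
  have "fs!0 \<in> Y"
  proof -
    have "(0::'a) \<in> vp V 2" using vp_mono[OF V0, of 0 0 2] by simp
    then have "\<exists>i<n. ?Rn\<^sup>*\<^sup>* 0 i \<and> -(fs!i) + fs!0 \<in> vp V 2" using n0 by (intro exI[of _ 0]) auto
    then show ?thesis unfolding Y_def using fsH[OF n0] by simp
  qed
  assume j: "j < n"
  have "-(fs!0) + fs!j \<in> H" using hsub_add[OF hsub_neg[OF symV fsH[OF n0]] fsH[OF j]] .
  then obtain k where "-(fs!0) + fs!j \<in> vp V k" unfolding hsub_def by auto
  then have "fs!0 + (-(fs!0) + fs!j) \<in> Y" using all[OF \<open>fs!0 \<in> Y\<close>] by blast
  then have "fs!j \<in> Y" by (simp add: add.assoc[symmetric])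
  then have "\<exists>i<n. ?Rn\<^sup>*\<^sup>* 0 i \<and> -(fs!i) + fs!j \<in> vp V 2" unfolding Y_def by simp
  then obtain i where i: "i < n" "?Rn\<^sup>*\<^sup>* 0 i" "-(fs!i) + fs!j \<in> vp V 2" by blast
  have "-(fs!i) + fs!j \<in> vp V 5" using vp_mono[OF V0 i(3), of 5] by simp
  then have "adj i j" unfolding adj_def .
  then have "?Rn i j" using i(1) j by simp
  then show ?thesis by (rule rtranclp.rtrancl_into_rtrancl[OF i(2)])
qed

lemma partH: "\<exists>c PP. c > 0 \<and> good H c PP \<and> (\<forall>P\<in>PP. \<exists>g. P \<subseteq> (+) g ` vp V 7)"
proof -
  have n0: "n > 0" using fs_ne by simp
  obtain w where w: "w \<noteq> []" "set w = {..<n}" "successively adj w"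
    using walk_exists[OF n0, of adj] adj_sym conn by blast
  define L where "L = length w"
  have L0: "L > 0" using w(1) unfolding L_def by simp
  have wn: "w!t < n" if "t < L" for t using w(2) that unfolding L_def by (metis lessThan_iff nth_mem)
  define I where "I i = {t. t < L \<and> w!t = i}" for i
  have Ifin: "finite (I i)" for i unfolding I_def by simp
  have Ine: "I i \<noteq> {}" if "i < n" for i
  proof -
    have "i \<in> set w" using w(2) that by simp
    then obtain t where "t < L" "w!t = i" unfolding L_def by (metis in_set_conv_nth)
    then show ?thesis unfolding I_def by blast
  qed
  have cardI: "card (I i) \<le> L" for i
  proof -
    have "I i \<subseteq> {..<L}" unfolding I_def by auto
    then show ?thesis by (metis card_lessThan card_mono finite_lessThan)
  qed
  have "\<forall>i\<in>{..<n}. \<exists>P. (\<forall>t\<in>I i. P t \<in> sets M \<and> measure M (P t) = measure M (Q i) / card (I i))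
      \<and> disjoint_family_on P (I i) \<and> (\<Union>t\<in>I i. P t) = Q i"
    using eqdiv_index[OF Ifin Ine Q_sets] by blast
  from bchoice[OF this] obtain Pd where Pd0: "\<forall>i\<in>{..<n}. (\<forall>t\<in>I i. Pd i t \<in> sets M \<and> measure M (Pd i t) = measure M (Q i) / card (I i))
      \<and> disjoint_family_on (Pd i) (I i) \<and> (\<Union>t\<in>I i. Pd i t) = Q i" by blast
  have Pd: "(\<forall>t\<in>I i. Pd i t \<in> sets M \<and> measure M (Pd i t) = measure M (Q i) / card (I i))
      \<and> disjoint_family_on (Pd i) (I i) \<and> (\<Union>t\<in>I i. Pd i t) = Q i" if "i < n" for i
    using Pd0 that by blast
  define S where "S t = Pd (w!t) t" for t
  have tI: "t \<in> I (w!t)" if "t < L" for t unfolding I_def using that by simp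
  have S_sets: "S t \<in> sets M" if "t < L" for t using Pd[OF wn[OF that]] tI[OF that] unfolding S_def by blast
  have S_Q: "S t \<subseteq> Q (w!t)" if "t < L" for t using Pd[OF wn[OF that]] tI[OF that] unfolding S_def by blast
  have S_meas: "measure M (S t) \<ge> measure M V / L" if "t < L" for t
  proof -
    have "measure M (S t) = measure M (Q (w!t)) / card (I (w!t))"
      using Pd[OF wn[OF that]] tI[OF that] unfolding S_def by blast
    moreover have "measure M V / L \<le> measure M (Q (w!t)) / card (I (w!t))"
    proof (rule frac_le)
      show "0 \<le> measure M (Q (w!t))" by simp
      show "measure M V \<le> measure M (Q (w!t))" by (rule Q_meas)
      show "0 < real (card (I (w!t)))" using Ine[OF wn[OF that]] Ifin by (simp add: card_gt_0_iff)
      show "real (card (I (w!t))) \<le> real L" using cardI by simp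
    qed
    ultimately show ?thesis by simp
  qed
  have S_disj: "S t \<inter> S t' = {}" if "t < L" "t' < L" "t \<noteq> t'" for t t'
  proof (cases "w!t = w!t'")
    case True
    have "disjoint_family_on (Pd (w!t)) (I (w!t))" using Pd[OF wn[OF that(1)]] by blast
    moreover have "t' \<in> I (w!t)" using tI[OF that(2)] True by simp
    ultimately show ?thesis using tI[OF that(1)] that(3) True unfolding S_def disjoint_family_on_def by metis
  next
    case False
    then have "Q (w!t) \<inter> Q (w!t') = {}" using Q_disj wn that by blast
    then show ?thesis using S_Q that by blast
  qed
  have S_union: "(\<Union>t<L. S t) = H"
  proof
    show "(\<Union>t<L. S t) \<subseteq> H" using S_Q Q_H wn by blast
  next
    show "H \<subseteq> (\<Union>t<L. S t)"
    proof
      fix h assume "h \<in> H"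
      then obtain i where i: "i < n" "h \<in> Q i" using Q_cover by blast
      then obtain t where t: "t \<in> I i" "h \<in> Pd i t" using Pd[OF i(1)] by blast
      then have "t < L" "w!t = i" unfolding I_def by auto
      then show "h \<in> (\<Union>t<L. S t)" using t unfolding S_def by blast
    qed
  qed
  define okp where "okp P \<longleftrightarrow> (\<exists>g. P \<subseteq> (+) g ` vp V 7)" for P
  have okmono: "okp Q' \<Longrightarrow> Q'' \<subseteq> Q' \<Longrightarrow> okp Q''" for Q' Q'' unfolding okp_def by blast
  have S_loc: "-(fs!(w!t)) + x \<in> vp V 2" if "t < L" "x \<in> S t" for t x
  proof -
    have "x \<in> (+) (fs!(w!t)) ` vp V 2" using S_Q[OF that(1)] Q_sub that(2) by blast
    then show ?thesis by (simp add: tr_mem)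
  qed
  have ok0: "okp (S t)" if "t < L" for t
  proof -
    have "S t \<subseteq> (+) (fs!(w!t)) ` vp V 7"
    proof
      fix x assume "x \<in> S t"
      then have "-(fs!(w!t)) + x \<in> vp V 7" using vp_mono[OF V0 S_loc[OF that], of x 7] by simp
      then show "x \<in> (+) (fs!(w!t)) ` vp V 7" by (simp add: tr_mem)
    qed
    then show ?thesis unfolding okp_def by blast
  qed
  have ok1: "okp (S t \<union> S (Suc t))" if "Suc t < L" for t
  proof -
    have t: "t < L" using that by simp
    have "adj (w!t) (w!Suc t)" using successively_nth[OF w(3)] that unfolding L_def by blast
    then have a: "-(fs!(w!t)) + fs!(w!Suc t) \<in> vp V 5" unfolding adj_def .
    have "S t \<union> S (Suc t) \<subseteq> (+) (fs!(w!t)) ` vp V 7"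
    proof
      fix x assume "x \<in> S t \<union> S (Suc t)"
      then show "x \<in> (+) (fs!(w!t)) ` vp V 7"
      proof
        assume "x \<in> S t"
        then have "-(fs!(w!t)) + x \<in> vp V 7" using vp_mono[OF V0 S_loc[OF t], of x 7] by simp
        then show ?thesis by (simp add: tr_mem)
      next
        assume "x \<in> S (Suc t)"
        then have "-(fs!(w!Suc t)) + x \<in> vp V 2" using S_loc[OF that] by simp
        then have "(-(fs!(w!t)) + fs!(w!Suc t)) + (-(fs!(w!Suc t)) + x) \<in> vp V (5 + 2)" by (rule vp_add[OF a])
        then have "-(fs!(w!t)) + x \<in> vp V 7" by (simp add: add.assoc)
        then show ?thesis by (simp add: tr_mem)
      qed
    qed
    then show ?thesis unfolding okp_def by blast
  qed
  define mH where "mH = measure M H"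
  have "0 \<in> H" by (rule hsub_0)
  then have mH0: "mH > 0" unfolding mH_def by (rule pos_open[OF hsub_open[OF openV V0]])
  define k where "k = nat \<lceil>real L * mH / measure M V\<rceil> + 1"
  have k0: "real k > 0" unfolding k_def by simp
  define c where "c = mH / real k"
  have c0: "c > 0" unfolding c_def using mH0 k0 by simp
  have kc: "real k * c = mH" unfolding c_def using k0 by simp
  have cle: "c \<le> measure M V / L"
  proof -
    have "real L * mH / measure M V \<le> real k" unfolding k_def by linarith
    then have "real L * mH \<le> real k * measure M V" using mV by (simp add: divide_le_eq)
    then have "mH / real k \<le> measure M V / real L" using k0 L0 by (simp add: divide_le_eq le_divide_eq mult.commute)
    then show ?thesis unfolding c_def .
  qed
  have cS: "c \<le> measure M (S t)" if "t < L" for t using cle S_meas[OF that] by linarith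
  define Ss where "Ss = map S [Suc 0..<L]"
  have full: "map S [0..<L] = S 0 # Ss" unfolding Ss_def using L0 by (simp add: upt_conv_Cons)
  have sw_full: "sorted_wrt (\<lambda>X Y. X \<inter> Y = {}) (map S [0..<L])"
    unfolding sorted_wrt_iff_nth_less using S_disj by auto
  have sc_full: "successively (\<lambda>X Y. okp (X \<union> Y)) (map S [0..<L])"
    unfolding successively_conv_nth using ok1 by auto
  have sets_full: "\<forall>X\<in>set (map S [0..<L]). X \<in> sets M" using S_sets by auto
  have un_full: "\<Union>(set (map S [0..<L])) = H" using S_union by (auto simp: atLeast0LessThan)
  have "measure M (\<Union>(set (map S [0..<L]))) = sum_list (map (measure M) (map S [0..<L]))"
    by (rule measure_list_union[OF sets_full sw_full])
  then have tot: "measure M {} + measure M (S 0) + sum_list (map (measure M) Ss) = real k * c"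
    using un_full kc unfolding full mH_def by simp
  have sw: "sorted_wrt (\<lambda>X Y. X \<inter> Y = {}) ({} # S 0 # Ss)" using sw_full unfolding full by simp
  have sc: "successively (\<lambda>X Y. okp (X \<union> Y)) (S 0 # Ss)" using sc_full unfolding full .
  have Ts: "\<forall>T\<in>set Ss. T \<in> sets M \<and> c \<le> measure M T" unfolding Ss_def using S_sets cS by auto
  have "\<exists>PP. good ({} \<union> S 0 \<union> \<Union>(set Ss)) c PP \<and> (\<forall>P\<in>PP. okp P)"
    apply (rule chunk[where ok=okp and Ss=Ss, OF c0])
    subgoal using okmono by blast
    using S_sets[OF L0] Ts cS[OF L0] sw sc tot ok0[OF L0] c0 by auto
  then obtain PP where PP: "good ({} \<union> S 0 \<union> \<Union>(set Ss)) c PP" "\<forall>P\<in>PP. okp P" by blast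
  have "{} \<union> S 0 \<union> \<Union>(set Ss) = H" using un_full unfolding full by simp
  then show ?thesis using PP c0 unfolding okp_def by auto
qed

end

context hctxV begin

lemma partH_V: "\<exists>c PP. c > 0 \<and> good H c PP \<and> (\<forall>P\<in>PP. \<exists>g. P \<subseteq> (+) g ` vp V 7)"
proof -
  obtain F where F: "F \<subseteq> H" "finite F" "F \<noteq> {}" "\<forall>f\<in>F. \<forall>g\<in>F. f \<noteq> g \<longrightarrow> (+) f ` V \<inter> (+) g ` V = {}"
      "\<forall>h\<in>H. \<exists>f\<in>F. -f + h \<in> vp V 2"
    using packing_set by (elim exE conjE) (rule that; assumption)
  obtain fs where fs: "set fs = F" "distinct fs" using finite_distinct_list[OF F(2)] by blast
  have a1: "fs \<noteq> []" using fs F(3) by auto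
  have a2: "set fs \<subseteq> H" using fs F(1) by auto
  have a3: "(+) (fs!i) ` V \<inter> (+) (fs!j) ` V = {}" if "i < length fs" "j < length fs" "i \<noteq> j" for i j
  proof -
    have ne: "fs!i \<noteq> fs!j" using fs(2) that by (simp add: nth_eq_iff_index_eq)
    have i1: "fs!i \<in> F" using fs(1) that(1) nth_mem by blast
    have i2: "fs!j \<in> F" using fs(1) that(2) nth_mem by blast
    show ?thesis by (rule F(4)[rule_format, OF i1 i2 ne])
  qed
  have a4: "\<exists>i<length fs. -(fs!i) + h \<in> vp V 2" if hH: "h \<in> H" for h
  proof -
    obtain f where f: "f \<in> F" "-f + h \<in> vp V 2" using F(5)[rule_format, OF hH] by (elim bexE)
    then have "f \<in> set fs" using fs(1) by simp
    then obtain i where "i < length fs" "fs!i = f" by (auto simp: in_set_conv_nth)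
    then show ?thesis using f(2) by blast
  qed
  have ax: "hctxF_axioms V fs" unfolding hctxF_axioms_def using a1 a2 a3 a4 by blast
  interpret hctxF M V fs by (intro hctxF.intro hctxV_axioms ax)
  show ?thesis by (rule partH)
qed

lemma whole:
  "\<exists>c PP. c > 0 \<and> finite PP \<and> \<Union>PP = UNIV \<and> disjoint PP \<and>
     (\<forall>P\<in>PP. P \<in> sets M \<and> measure M P = c \<and> (\<exists>g. P \<subseteq> (+) g ` vp V 7))"
proof -
  obtain c PH where c: "c > 0" "good H c PH" "\<forall>P\<in>PH. \<exists>g. P \<subseteq> (+) g ` vp V 7"
    using partH_V by blast
  have PH: "finite PH" "\<Union>PH = H" "disjoint PH" "\<forall>P\<in>PH. P \<in> sets M \<and> measure M P = c"
    using c(2) unfolding good_def by auto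
  define f where "f x = (+) x ` H" for x
  have opf: "open (f x)" for x unfolding f_def by (rule open_tr[OF hsub_open[OF openV V0]])
  have xf: "x \<in> f x" for x unfolding f_def using hsub_0 by (simp add: tr_mem)
  have "UNIV \<subseteq> (\<Union>x\<in>UNIV. f x)" using xf by blast
  then obtain C0 where C0: "finite C0" "UNIV \<subseteq> (\<Union>x\<in>C0. f x)"
    using compactE_image[OF cptG, of UNIV f] opf by metis
  define A where "A = inv_into C0 f ` (f ` C0)"
  have Afin: "finite A" unfolding A_def using C0(1) by simp
  have Acov: "\<exists>a\<in>A. x \<in> f a" for x
  proof -
    obtain y where y: "y \<in> C0" "x \<in> f y" using C0(2) by blast
    have e: "f (inv_into C0 f (f y)) = f y" using y(1) by (intro f_inv_into_f imageI)
    have m: "inv_into C0 f (f y) \<in> A" unfolding A_def using y(1) by (intro imageI)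
    show ?thesis using e m y(2) by (intro bexI[of _ "inv_into C0 f (f y)"]) simp_all
  qed
  have Adisj: "f a \<inter> f a' = {}" if "a \<in> A" "a' \<in> A" "a \<noteq> a'" for a a'
  proof (rule ccontr)
    assume "f a \<inter> f a' \<noteq> {}"
    then obtain z where "z \<in> f a" "z \<in> f a'" by blast
    then have eq: "f a = f a'" unfolding f_def by (rule coset_eq[OF symV])
    have "a \<in> inv_into C0 f ` (f ` C0)" using that(1) unfolding A_def .
    then obtain K where K: "K \<in> f ` C0" "a = inv_into C0 f K" by (rule imageE) simp
    have "a' \<in> inv_into C0 f ` (f ` C0)" using that(2) unfolding A_def .
    then obtain K' where K': "K' \<in> f ` C0" "a' = inv_into C0 f K'" by (rule imageE) simp
    have "f a = K" unfolding K(2) by (rule f_inv_into_f[OF K(1)])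
    moreover have "f a' = K'" unfolding K'(2) by (rule f_inv_into_f[OF K'(1)])
    ultimately have "K = K'" using eq by simp
    then show False using K K' that(3) by simp
  qed
  define PP where "PP = (\<lambda>(a, P). (+) a ` P) ` (A \<times> PH)"
  have "finite PP" unfolding PP_def using Afin PH(1) by simp
  moreover have "\<Union>PP = UNIV"
  proof -
    have "x \<in> \<Union>PP" for x
    proof -
      obtain a where a: "a \<in> A" "x \<in> f a" using Acov by blast
      then have "-a + x \<in> H" unfolding f_def by (simp add: tr_mem)
      then obtain P where P: "P \<in> PH" "-a + x \<in> P" using PH(2) by blast
      then have "x \<in> (+) a ` P" by (simp add: tr_mem)
      then show ?thesis unfolding PP_def using a(1) P(1) by blast
    qed
    then show ?thesis by blast
  qed
  moreover have "disjoint PP"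
    unfolding pairwise_def disjnt_def
  proof (intro ballI impI)
    fix X Y assume XY: "X \<in> PP" "Y \<in> PP" "X \<noteq> Y"
    obtain a P where aP: "a \<in> A" "P \<in> PH" "X = (+) a ` P" using XY(1) unfolding PP_def by auto
    obtain b Q where bQ: "b \<in> A" "Q \<in> PH" "Y = (+) b ` Q" using XY(2) unfolding PP_def by auto
    show "X \<inter> Y = {}"
    proof (cases "a = b")
      case True
      then have "P \<noteq> Q" using XY(3) aP bQ by auto
      then have "P \<inter> Q = {}" using PH(3) aP(2) bQ(2) unfolding pairwise_def disjnt_def by blast
      then show ?thesis using aP(3) bQ(3) True by (auto simp: tr_mem)
    next
      case False
      have "P \<subseteq> H" "Q \<subseteq> H" using PH(2) aP(2) bQ(2) by auto
      then have "X \<subseteq> f a" "Y \<subseteq> f b" unfolding f_def using aP(3) bQ(3) by auto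
      then show ?thesis using Adisj[OF aP(1) bQ(1) False] by blast
    qed
  qed
  moreover have "\<forall>X\<in>PP. X \<in> sets M \<and> measure M X = c \<and> (\<exists>g. X \<subseteq> (+) g ` vp V 7)"
  proof
    fix X assume "X \<in> PP"
    then obtain a P where aP: "a \<in> A" "P \<in> PH" "X = (+) a ` P" unfolding PP_def by auto
    have Ps: "P \<in> sets M" "measure M P = c" using PH(4) aP(2) by auto
    have "X \<in> sets M" using borel_tr[of P a] Ps(1) aP(3) sM by simp
    moreover have "measure M X = c" using inv[OF Ps(1), of a] Ps(2) aP(3) by simp
    moreover obtain g where g: "P \<subseteq> (+) g ` vp V 7" using c(3) aP(2) by blast
    have "X \<subseteq> (+) (a + g) ` vp V 7"
    proof
      fix x assume "x \<in> X"
      then have "-a + x \<in> P" using aP(3) by (simp add: tr_mem)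
      then have "-g + (-a + x) \<in> vp V 7" using g by (auto simp: tr_mem)
      moreover have "-(a + g) + x = -g + (-a + x)" by (simp only: minus_add add.assoc)
      ultimately show "x \<in> (+) (a + g) ` vp V 7" unfolding tr_mem by simp
    qed
    ultimately show "X \<in> sets M \<and> measure M X = c \<and> (\<exists>g. X \<subseteq> (+) g ` vp V 7)" by blast
  qed
  ultimately show ?thesis using c(1) by (intro exI[of _ c] exI[of _ PP]) simp
qed

end


theorem theorem2:
  fixes \<nu> :: "'a::{topological_group_add,t2_space} measure"
    and U :: "'a set"
  assumes compact_G: "compact (UNIV :: 'a set)"
    and non_discrete: "\<not> (\<forall>S :: 'a set. open S)"
    and haar: "haar_measure \<nu>"
    and normalized: "emeasure \<nu> UNIV = 1"
    and nbhd: "0 \<in> interior U"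
  shows "\<exists>\<P>. finite \<P> \<and> partition_on UNIV \<P> \<and> (\<forall>P\<in>\<P>. haar_measurable \<nu> P)
             \<and> U_fine U \<P> \<and> equisize \<nu> \<P>"
proof -
  have oU: "open (interior U)" by simp
  obtain V1 where V1: "open V1" "0 \<in> V1" "\<forall>x\<in>V1. \<forall>y\<in>V1. x + y \<in> interior U"
    using nbhd_half[OF oU nbhd] by blast
  obtain V2 where V2: "open V2" "0 \<in> V2" "\<forall>x\<in>V2. \<forall>y\<in>V2. x + y \<in> V1"
    using nbhd_half[OF V1(1,2)] by blast
  obtain V3 where V3: "open V3" "0 \<in> V3" "\<forall>x\<in>V3. -x \<in> V3" "\<forall>x\<in>V3. \<forall>y\<in>V3. x + y \<in> V2"
    using nbhd_half[OF V2(1,2)] by blast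
  have vp7: "x \<in> U" if "x \<in> vp V3 7" for x
  proof -
    have "x \<in> vp V3 (2 * 4)" using vp_mono[OF V3(2) that, of 8] by simp
    then have "x \<in> vp V2 4" using vp_double[OF V3(4)] by blast
    then have "x \<in> vp V2 (2 * 2)" by simp
    then have "x \<in> vp V1 2" using vp_double[OF V2(3)] by blast
    then have "x \<in> vp V1 (2 * 1)" by simp
    then have "x \<in> vp (interior U) 1" using vp_double[OF V1(3)] by blast
    then have "x \<in> interior U" using vp1 by simp
    then show ?thesis using interior_subset by blast
  qed
  have H: "sets \<nu> = sets borel"
      "\<And>g A. A \<in> sets borel \<Longrightarrow> emeasure \<nu> ((+) g ` A) = emeasure \<nu> A"
      "\<And>A. A \<in> sets borel \<Longrightarrow> emeasure \<nu> A = (INF V\<in>{V. open V \<and> A \<subseteq> V}. emeasure \<nu> V)"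
    using haar unfolding haar_measure_def by auto
  have sp: "space \<nu> = UNIV" using sets_eq_imp_space_eq[OF H(1)] by simp
  have fm: "finite_measure \<nu>" by (rule finite_measureI) (simp add: sp normalized)
  have hc: "hctx \<nu>"
    by (intro hctx.intro fm hctx_axioms.intro H compact_G non_discrete normalized)
  have hv: "hctxV \<nu> V3"
    by (intro hctxV.intro hc hctxV_axioms.intro V3(1,2,3))
  obtain c PP where cPP: "c > 0" "finite PP" "\<Union>PP = UNIV" "disjoint PP"
      "\<forall>P\<in>PP. P \<in> sets \<nu> \<and> measure \<nu> P = c \<and> (\<exists>g. P \<subseteq> (+) g ` vp V3 7)"
    using hctxV.whole[OF hv] by blast
  have ne: "{} \<notin> PP" using cPP(1,5) by auto
  have part: "partition_on UNIV PP" unfolding partition_on_def using cPP(3,4) ne by blast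
  have hm: "\<forall>P\<in>PP. haar_measurable \<nu> P"
    unfolding haar_measurable_def using cPP(5) by auto
  have uf: "U_fine U PP"
    unfolding U_fine_def
  proof
    fix P assume "P \<in> PP"
    then obtain g where g: "P \<subseteq> (+) g ` vp V3 7" using cPP(5) by blast
    have "(+) g ` vp V3 7 \<subseteq> (+) g ` U" using vp7 by blast
    then show "\<exists>g. P \<subseteq> (\<lambda>x. g + x) ` U" using g by blast
  qed
  have em: "emeasure (completion \<nu>) P = ennreal c" if "P \<in> PP" for P
  proof -
    have "P \<in> sets \<nu>" "measure \<nu> P = c" using cPP(5) that by auto
    then show ?thesis using finite_measure.emeasure_eq_measure[OF fm, of P] by simp
  qed
  have eq: "equisize \<nu> PP" unfolding equisize_def using em by simp
  show ?thesis using cPP(2) part hm uf eq by blast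
qed

end
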